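(* Let $n>1$ be an integer and let $\langle\mathscr{V},\tau,\sim,\Lambda,\mathrm{V},\Rightarrow\rangle$ be a many valued logic with exactly $n$ values (i.e. $|\mathscr{V}|=n$) whose disjunction operation $\mathrm{V}$ is commutative and associative. Suppose that the formula $(\mathfrak{p}\rightarrow\mathfrak{p})\vee\mathfrak{q}$ (for distinct atoms $\mathfrak{p},\mathfrak{q}$) is a tautology of this logic. Then for distinct atoms $\mathfrak{p}_0,\mathfrak{p}_1,\dots,\mathfrak{p}_n$, the formula $$\bigvee_{0\leqslant i<j\leqslant n}(\mathfrak{p}_i\rightarrow\mathfrak{p}_j)$$ (the disjunction of all the $\binom{n+1}{2}$ implications $\mathfrak{p}_i\rightarrow\mathfrak{p}_j$ with $i<j$, in any order and bracketing) is a tautology of this logic.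
   Context: Formulas are built from propositional atoms using $\neg,\wedge,\vee,\rightarrow$ (and the constant $\top$). A many valued logic is a tuple $\langle\mathscr{V},\tau,\sim,\Lambda,\mathrm{V},\Rightarrow\rangle$ where $\mathscr{V}$ is a set of values, $\tau\in\mathscr{V}$ is a designated element (truth), $\sim\colon\mathscr{V}\to\mathscr{V}$ and $\Lambda,\mathrm{V},\Rightarrow\colon\mathscr{V}^2\to\mathscr{V}$. A valuation is any map $\nu$ from atoms to $\mathscr{V}$, extended to formulas by $\nu(\neg\varphi)=\sim\nu(\varphi)$, $\nu(\varphi\wedge\psi)=\nu(\varphi)\,\Lambda\,\nu(\psi)$, $\nu(\varphi\vee\psi)=\nu(\varphi)\,\mathrm{V}\,\nu(\psi)$, $\nu(\varphi\rightarrow\psi)=\nu(\varphi)\Rightarrow\nu(\psi)$. A formula $\theta$ is a tautology if $\nu(\theta)=\tau$ for every valuation $\nu$. An $n$-valued logic is one with $|\mathscr{V}|=n$. *)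

theory Defs
  imports "HOL-Library.Multiset"
begin

datatype 'a form =
    Atom 'a
  | Top
  | Neg "'a form"
  | Conj "'a form" "'a form"
  | Disj "'a form" "'a form"
  | Imp "'a form" "'a form"

record 'v mvlogic =
  tru :: 'v
  neg :: "'v \<Rightarrow> 'v"
  conj :: "'v \<Rightarrow> 'v \<Rightarrow> 'v"
  disj :: "'v \<Rightarrow> 'v \<Rightarrow> 'v"
  imp :: "'v \<Rightarrow> 'v \<Rightarrow> 'v"

fun eval :: "'v mvlogic \<Rightarrow> ('a \<Rightarrow> 'v) \<Rightarrow> 'a form \<Rightarrow> 'v" where
  "eval L \<nu> (Atom x) = \<nu> x"
| "eval L \<nu> Top = tru L"
| "eval L \<nu> (Neg \<phi>) = neg L (eval L \<nu> \<phi>)"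
| "eval L \<nu> (Conj \<phi> \<psi>) = conj L (eval L \<nu> \<phi>) (eval L \<nu> \<psi>)"
| "eval L \<nu> (Disj \<phi> \<psi>) = disj L (eval L \<nu> \<phi>) (eval L \<nu> \<psi>)"
| "eval L \<nu> (Imp \<phi> \<psi>) = imp L (eval L \<nu> \<phi>) (eval L \<nu> \<psi>)"

definition tautology :: "'v mvlogic \<Rightarrow> 'a form \<Rightarrow> bool" where
  "tautology L \<theta> \<longleftrightarrow> (\<forall>\<nu>. eval L \<nu> \<theta> = tru L)"

inductive is_disj_of :: "'a form \<Rightarrow> 'a form multiset \<Rightarrow> bool" where
  leaf: "is_disj_of \<phi> {#\<phi>#}"
| node: "is_disj_of \<phi> M \<Longrightarrow> is_disj_of \<psi> N \<Longrightarrow> is_disj_of (Disj \<phi> \<psi>) (M + N)"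

definition chain_imps :: "(nat \<Rightarrow> 'a) \<Rightarrow> nat \<Rightarrow> 'a form multiset" where
  "chain_imps p n = mset [Imp (Atom (p i)) (Atom (p j)). i \<leftarrow> [0..<Suc n], j \<leftarrow> [Suc i..<Suc n]]"

end

theory Submission
  imports Defs
begin

lemma disj_mem:
  assumes C: "\<forall>x y. disj L x y = disj L y x"
    and A: "\<forall>x y z. disj L (disj L x y) z = disj L x (disj L y z)"
  shows "is_disj_of \<theta> M \<Longrightarrow> \<phi> \<in># M \<Longrightarrow>
     (\<theta> = \<phi> \<and> M = {#\<phi>#}) \<or> (\<exists>r. eval L \<nu> \<theta> = disj L (eval L \<nu> \<phi>) r)"
proof (induction rule: is_disj_of.induct)
  case (leaf \<phi>')
  then show ?case by simp
next
  case (node \<phi>1 M \<psi> N)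
  show ?case
  proof (cases "\<phi> \<in># M")
    case True
    from node.IH(1)[OF True] show ?thesis
      using A by auto
  next
    case False
    then have "\<phi> \<in># N" using node.prems by simp
    from node.IH(2)[OF this] show ?thesis
      using A C by (metis eval.simps(5))
  qed
qed

theorem lemma1:
  fixes L :: "'v::finite mvlogic" and n :: nat
    and p q :: 'a and ps :: "nat \<Rightarrow> 'a" and \<theta> :: "'a form"
  assumes "n > 1"
    and "card (UNIV :: 'v set) = n"
    and "\<forall>x y. disj L x y = disj L y x"
    and "\<forall>x y z. disj L (disj L x y) z = disj L x (disj L y z)"
    and "p \<noteq> q"
    and "tautology L (Disj (Imp (Atom p) (Atom p)) (Atom q))"
    and "inj_on ps {0..n}"
    and "is_disj_of \<theta> (chain_imps ps n)"
  shows "tautology L \<theta>"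
  unfolding tautology_def
proof
  fix \<nu> :: "'a \<Rightarrow> 'v"
  have T: "disj L (imp L v v) y = tru L" for v y
  proof -
    have "eval L (\<lambda>x. if x = q then y else v) (Disj (Imp (Atom p) (Atom p)) (Atom q)) = tru L"
      using assms(6) unfolding tautology_def by blast
    then show ?thesis using assms(5) by simp
  qed
  have "\<not> inj_on (\<nu> \<circ> ps) {0..n}"
  proof
    assume "inj_on (\<nu> \<circ> ps) {0..n}"
    then have "card ((\<nu> \<circ> ps) ` {0..n}) = Suc n" using card_image by (metis card_atLeastAtMost minus_nat.diff_0)
    moreover have "card ((\<nu> \<circ> ps) ` {0..n}) \<le> card (UNIV :: 'v set)"
      by (rule card_mono) auto
    ultimately show False using assms(2) by simp
  qed
  then obtain i j where ij: "i \<in> {0..n}" "j \<in> {0..n}" "i \<noteq> j" "\<nu> (ps i) = \<nu> (ps j)"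
    unfolding inj_on_def by auto
  then obtain a b where ab: "a < b" "b \<le> n" "\<nu> (ps a) = \<nu> (ps b)"
    by (metis atLeastAtMost_iff linorder_neqE_nat)
  have mem: "Imp (Atom (ps a)) (Atom (ps b)) \<in># chain_imps ps n"
    using ab unfolding chain_imps_def by (auto simp del: upt_Suc intro!: bexI[of _ a])
  have m1: "Imp (Atom (ps 0)) (Atom (ps 1)) \<in># chain_imps ps n"
    using assms(1) unfolding chain_imps_def by (auto simp del: upt_Suc intro!: bexI[of _ 0])
  have m2: "Imp (Atom (ps 0)) (Atom (ps 2)) \<in># chain_imps ps n"
    using assms(1) unfolding chain_imps_def by (auto simp del: upt_Suc intro!: bexI[of _ 0])
  have "ps 1 \<noteq> ps 2"
  proof -
    have "(1::nat) \<in> {0..n}" "(2::nat) \<in> {0..n}" using assms(1) by auto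
    then show ?thesis using assms(7) unfolding inj_on_def by fastforce
  qed
  then have ns: "chain_imps ps n \<noteq> {#Imp (Atom (ps a)) (Atom (ps b))#}"
    using m1 m2 by auto
  from disj_mem[OF assms(3) assms(4) assms(8) mem, of \<nu>] ns
  obtain r where "eval L \<nu> \<theta> = disj L (eval L \<nu> (Imp (Atom (ps a)) (Atom (ps b)))) r"
    by blast
  then show "eval L \<nu> \<theta> = tru L" using ab T by simp
qed

end
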